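(* Let $n\ge 2$ be an integer, $A,B$ real $n\times n$ matrices, $M := A + iB$, $\alpha := \frac1n s(A)$, $\beta := \frac1n\big(q(A)+q(B)\big)$, and $\kappa := \frac{2n\beta - \alpha^2}{2n-1}$. Suppose $\beta>0$. Then: if $\alpha^2 < \beta$: $|\det M| \le \beta^{n/2}$; if $\alpha^2 = \beta$: $|\det M| \le |\alpha|^{1/2}\kappa^{\frac{2n-1}{4}} = \beta^{n/2}$; if $\alpha^2 > \beta$: $|\det M| \le |\alpha|^{1/2}\kappa^{\frac{2n-1}{4}} < \beta^{n/2}$.
   Context: For a real matrix $X$, $s(X)$ denotes the sum of all entries of $X$ and $q(X)$ the sum of the squares of all entries of $X$. *)

theory Defs
  imports "HOL-Analysis.Analysis"
begin

definition msum :: "real^'n^'m \<Rightarrow> real" where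
  "msum X = (\<Sum>i\<in>UNIV. \<Sum>j\<in>UNIV. X $ i $ j)"

definition msq :: "real^'n^'m \<Rightarrow> real" where
  "msq X = (\<Sum>i\<in>UNIV. \<Sum>j\<in>UNIV. (X $ i $ j)^2)"

definition cmat :: "real^'n^'m \<Rightarrow> real^'n^'m \<Rightarrow> complex^'n^'m" where
  "cmat A B = (\<chi> i j. Complex (A $ i $ j) (B $ i $ j))"

end

theory Submission
  imports Defs
begin


definition cin :: "complex^'n \<Rightarrow> complex^'n \<Rightarrow> complex" where
  "cin x y = (\<Sum>k\<in>UNIV. x$k * cnj (y$k))"
definition nsq :: "complex^'n \<Rightarrow> real" where
  "nsq x = (\<Sum>k\<in>UNIV. (cmod (x$k))^2)"

lemma cin_self: "cin x x = of_real (nsq x)"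
  unfolding cin_def nsq_def of_real_sum by (rule sum.cong) (simp, metis complex_norm_square)

lemma nsq_nonneg: "nsq x \<ge> 0"
  by (simp add: nsq_def sum_nonneg)

lemma nsq_zero: "nsq x = 0 \<Longrightarrow> x = 0"
  unfolding nsq_def
  by (subst (asm) sum_nonneg_eq_0_iff) (auto simp: vec_eq_iff)

lemma cin_add_left: "cin (x + y) z = cin x z + cin y z"
  by (simp add: cin_def distrib_right sum.distrib)
lemma cin_minus_left: "cin (x - y) z = cin x z - cin y z"
  by (simp add: cin_def left_diff_distrib sum_subtractf)
lemma cin_scale_left: "cin (c *s x) z = c * cin x z"
  by (simp add: cin_def sum_distrib_left mult.assoc)
lemma cin_scale_right: "cin x (c *s z) = cnj c * cin x z"
  by (simp add: cin_def sum_distrib_left mult_ac)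
lemma cin_sum_left: "cin (sum f S) z = (\<Sum>j\<in>S. cin (f j) z)"
  by (induction S rule: infinite_finite_induct) (auto simp: cin_def distrib_right sum.distrib)
lemma cin_sum_right: "cin z (sum f S) = (\<Sum>j\<in>S. cin z (f j))"
  by (induction S rule: infinite_finite_induct) (auto simp: cin_def distrib_left sum.distrib)
lemma cin_add_right: "cin z (x + y) = cin z x + cin z y"
  by (simp add: cin_def distrib_left sum.distrib)
lemma cin_sym: "cin x y = cnj (cin y x)"
  by (simp add: cin_def mult.commute)
lemma cin_zero_right: "cin x 0 = 0" by (simp add: cin_def)

lemma nsq_pyth: assumes "cin x y = 0" shows "nsq (x + y) = nsq x + nsq y"
proof -
  have "cin y x = 0" using assms cin_sym[of y x] by simp
  then have "of_real (nsq (x+y)) = (of_real (nsq x + nsq y) :: complex)"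
    using assms by (simp add: cin_self[symmetric] cin_add_left cin_add_right)
  then show ?thesis using of_real_eq_iff by blast
qed

lemma det_cnj: "det (\<chi> i j. cnj (A$i$j)) = cnj (det (A::complex^'n^'n))"
  by (simp add: det_def)

lemma row_eq: "row i A = A $ i" by (simp add: row_def vec_eq_iff)

lemma gs_step:
  fixes N :: "complex^'n^'n"
  assumes fin: "finite S" and kS: "k \<notin> S"
   and orth: "\<And>i j. i\<in>S \<Longrightarrow> j\<in>S \<Longrightarrow> i\<noteq>j \<Longrightarrow> cin (N$i) (N$j) = 0"
  defines "y \<equiv> \<Sum>j\<in>S. (cin (N$k) (N$j) / of_real (nsq (N$j))) *s N$j"
  defines "N' \<equiv> (\<chi> i. if i = k then row k N + (- y) else row i N)"
  shows "det N' = det N"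
    and "\<And>i j. i\<in>insert k S \<Longrightarrow> j\<in>insert k S \<Longrightarrow> i\<noteq>j \<Longrightarrow> cin (N'$i) (N'$j) = 0"
    and "\<And>i. nsq (N'$i) \<le> nsq (N$i)"
proof -
  have "- y \<in> vec.span {row j N |j. j \<noteq> k}"
    unfolding y_def
    by (intro vec.span_neg vec.span_sum vec.span_scale vec.span_base) (use kS in \<open>auto simp: row_eq\<close>)
  then show "det N' = det N" unfolding N'_def by (rule det_row_span)
next
  have cy: "cin y (N$l) = cin (N$k) (N$l)" if l: "l \<in> S" for l
  proof -
    have "cin y (N$l) = (\<Sum>j\<in>S. (cin (N$k) (N$j) / of_real (nsq (N$j))) * cin (N$j) (N$l))"
      unfolding y_def cin_sum_left cin_scale_left ..
    also have "\<dots> = (cin (N$k) (N$l) / of_real (nsq (N$l))) * cin (N$l) (N$l)"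
      using l fin orth by (subst sum.remove[of S l]) (auto intro!: sum.neutral)
    finally have 1: "cin y (N$l) = (cin (N$k) (N$l) / of_real (nsq (N$l))) * cin (N$l) (N$l)" .
    show ?thesis
    proof (cases "nsq (N$l) = 0")
      case True
      then have "N$l = 0" by (rule nsq_zero)
      then show ?thesis using 1 by (simp add: cin_zero_right cin_def)
    next
      case False
      then show ?thesis using 1 by (simp add: cin_self)
    qed
  qed
  have o1: "cin (N$k - y) (N$l) = 0" if "l \<in> S" for l
    using cy[OF that] by (simp add: cin_minus_left)
  have o2: "cin (N$l) (N$k - y) = 0" if "l \<in> S" for l
    using o1[OF that] cin_sym[of "N$l" "N$k - y"] by simp
  have rk: "N'$k = N$k - y" by (simp add: N'_def row_eq)
  have ro: "N'$i = N$i" if "i \<noteq> k" for i using that by (simp add: N'_def row_eq)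
  show "cin (N'$i) (N'$j) = 0" if "i\<in>insert k S" "j\<in>insert k S" "i\<noteq>j" for i j
    using that kS rk ro o1 o2 orth by (cases "i = k"; cases "j = k") auto
next
  have rk: "N'$k = N$k - y" by (simp add: N'_def row_eq)
  have ro: "N'$i = N$i" if "i \<noteq> k" for i using that by (simp add: N'_def row_eq)
  have cy: "cin (N$k - y) y = 0"
  proof -
    have "cin y (N$l) = cin (N$k) (N$l)" if l: "l \<in> S" for l
    proof -
      have "cin y (N$l) = (\<Sum>j\<in>S. (cin (N$k) (N$j) / of_real (nsq (N$j))) * cin (N$j) (N$l))"
        unfolding y_def cin_sum_left cin_scale_left ..
      also have "\<dots> = (cin (N$k) (N$l) / of_real (nsq (N$l))) * cin (N$l) (N$l)"
        using l fin orth by (subst sum.remove[of S l]) (auto intro!: sum.neutral)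
      finally have 1: "cin y (N$l) = (cin (N$k) (N$l) / of_real (nsq (N$l))) * cin (N$l) (N$l)" .
      show ?thesis
      proof (cases "nsq (N$l) = 0")
        case True
        then have "N$l = 0" by (rule nsq_zero)
        then show ?thesis using 1 by (simp add: cin_zero_right cin_def)
      next
        case False
        then show ?thesis using 1 by (simp add: cin_self)
      qed
    qed
    then have "cin (N$k - y) (N$l) = 0" if "l \<in> S" for l
      using that by (simp add: cin_minus_left)
    then show ?thesis unfolding y_def cin_sum_right cin_scale_right by simp
  qed
  have "nsq (N$k) = nsq (N$k - y) + nsq y"
    using nsq_pyth[OF cy] by simp
  then have "nsq (N'$k) \<le> nsq (N$k)" using rk nsq_nonneg[of y] by simp
  then show "nsq (N'$i) \<le> nsq (N$i)" for i using ro by (cases "i = k") auto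
qed

lemma gs_step_ex:
  fixes N :: "complex^'n^'n"
  assumes fin: "finite S" and kS: "k \<notin> S"
   and orth: "\<And>i j. i\<in>S \<Longrightarrow> j\<in>S \<Longrightarrow> i\<noteq>j \<Longrightarrow> cin (N$i) (N$j) = 0"
  shows "\<exists>N'. det N' = det N \<and> (\<forall>i\<in>insert k S. \<forall>j\<in>insert k S. i\<noteq>j \<longrightarrow> cin (N'$i) (N'$j) = 0) \<and> (\<forall>i. nsq (N'$i) \<le> nsq (N$i))"
  apply (rule exI)
  apply (intro conjI ballI impI allI)
    apply (rule gs_step(1)[OF assms])
    apply assumption+
   apply (rule gs_step(2)[OF assms])
        apply assumption+
  apply (rule gs_step(3)[OF assms])
     apply assumption+
  done

lemma gs_exists:
  fixes M :: "complex^'n^'n"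
  assumes "finite S"
  shows "\<exists>N. det N = det M \<and> (\<forall>i\<in>S. \<forall>j\<in>S. i\<noteq>j \<longrightarrow> cin (N$i) (N$j) = 0) \<and> (\<forall>i. nsq (N$i) \<le> nsq (M$i))"
  using assms
proof (induction S rule: finite_induct)
  case empty
  show ?case by (rule exI[of _ M]) simp
next
  case (insert k S)
  then obtain N where N: "det N = det M" "\<forall>i\<in>S. \<forall>j\<in>S. i\<noteq>j \<longrightarrow> cin (N$i) (N$j) = 0"
    "\<forall>i. nsq (N$i) \<le> nsq (M$i)" by blast
  have o: "\<And>i j. i\<in>S \<Longrightarrow> j\<in>S \<Longrightarrow> i\<noteq>j \<Longrightarrow> cin (N$i) (N$j) = 0" using N(2) by blast
  obtain N' where N': "det N' = det N" "\<forall>i\<in>insert k S. \<forall>j\<in>insert k S. i\<noteq>j \<longrightarrow> cin (N'$i) (N'$j) = 0"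
    "\<forall>i. nsq (N'$i) \<le> nsq (N$i)"
    using gs_step_ex[OF insert(1,2) o] by blast
  show ?case
    apply (rule exI[of _ N'])
    using N' N(1,3) order_trans by metis
qed

lemma hadamard:
  fixes M :: "complex^'n^'n"
  shows "(cmod (det M))^2 \<le> (\<Prod>i\<in>UNIV. nsq (M$i))"
proof -
  obtain N where N: "det N = det M" "\<forall>i j. i\<noteq>j \<longrightarrow> cin (N$i) (N$j) = 0"
    "\<forall>i. nsq (N$i) \<le> nsq (M$i)" using gs_exists[of "UNIV::'n set" M] by auto
  define H where "H = N ** (\<chi> i j. cnj (N$j$i))"
  have Hij: "H$i$j = cin (N$i) (N$j)" for i j
    by (simp add: H_def matrix_matrix_mult_def cin_def)
  have "(\<chi> i j. cnj (N$j$i)) = (\<chi> i j. cnj ((transpose N)$i$j))"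
    by (simp add: transpose_def)
  then have "det (\<chi> i j. cnj (N$j$i)) = cnj (det N)"
    by (simp add: det_cnj)
  then have "det H = det N * cnj (det N)"
    by (simp add: H_def det_mul)
  also have "\<dots> = of_real ((cmod (det N))^2)" by (rule complex_norm_square[symmetric])
  finally have "det H = of_real ((cmod (det N))^2)" .
  moreover have "det H = (\<Prod>i\<in>UNIV. H$i$i)"
    by (rule det_diagonal) (use N(2) Hij in auto)
  moreover have "(\<Prod>i\<in>UNIV. H$i$i) = (\<Prod>i\<in>UNIV. (of_real (nsq (N$i)) :: complex))"
    by (rule prod.cong) (simp_all only: Hij cin_self)
  ultimately have "of_real ((cmod (det N))^2) = (\<Prod>i\<in>UNIV. (of_real (nsq (N$i)) :: complex))"
    by simp
  then have "(cmod (det N))^2 = (\<Prod>i\<in>UNIV. nsq (N$i))"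
    unfolding of_real_prod[symmetric] of_real_eq_iff .
  also have "\<dots> \<le> (\<Prod>i\<in>UNIV. nsq (M$i))"
    by (rule prod_mono) (use N(3) nsq_nonneg in auto)
  finally show ?thesis using N(1) by simp
qed



lemma amgm:
  fixes x :: "'a \<Rightarrow> real"
  assumes fin: "finite S" and ne: "S \<noteq> {}" and nn: "\<And>i. i\<in>S \<Longrightarrow> x i \<ge> 0"
  shows "(\<Prod>i\<in>S. x i) \<le> ((\<Sum>i\<in>S. x i) / card S) ^ card S"
proof -
  define P where "P = (\<Prod>i\<in>S. x i)"
  have P0: "P \<ge> 0" unfolding P_def by (simp add: prod_nonneg nn)
  have c: "card S > 0" using fin ne card_gt_0_iff by blast
  have "P powr (1/card S) \<le> (\<Sum>i\<in>S. x i / card S)"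
    unfolding P_def by (rule arith_geom_mean[OF fin ne nn])
  also have "\<dots> = (\<Sum>i\<in>S. x i) / card S" by (simp add: sum_divide_distrib)
  finally have h: "P powr (1/card S) \<le> (\<Sum>i\<in>S. x i) / card S" .
  have e: "P = (P powr (1/card S)) ^ card S"
  proof (cases "P = 0")
    case True then show ?thesis using c by simp
  next
    case False
    then have "(P powr (1/card S)) ^ card S = P powr (real (card S) * (1 / card S))"
      by (simp add: powr_power)
    also have "\<dots> = P" using c P0 False by simp
    finally show ?thesis by simp
  qed
  have "P \<le> ((\<Sum>i\<in>S. x i) / card S) ^ card S"
    by (subst e) (rule power_mono[OF h], simp)
  then show ?thesis unfolding P_def .
qed

lemma key_strict:
  fixes a t S :: real and k :: nat
  assumes k: "k \<ge> 1" and aS: "S / (k+1) \<le> a" and at: "a < t" and tS: "t \<le> S"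
  shows "t * ((S - t)/k)^k < a * ((S-a)/k)^k"
proof -
  define p where "p = (S - t)/k"
  define q where "q = (S - a)/k"
  have kpos: "real k > 0" using k by simp
  have Spos: "S > 0"
  proof -
    have "S / (k+1) < S" using aS at tS by linarith
    then have "S < S * (k+1)" by (simp add: field_simps)
    then have "0 < S * k" by (simp add: algebra_simps)
    then show ?thesis using kpos by (simp add: zero_less_mult_iff)
  qed
  have "S/(k+1) > 0" using Spos by simp
  then have apos: "a > 0" using aS by linarith
  have p0: "p \<ge> 0" unfolding p_def using tS kpos by simp
  have pq: "p < q" unfolding p_def q_def using at kpos by (simp add: divide_strict_right_mono)
  have qle: "q \<le> S / (k+1)"
  proof -
    have "S - a \<le> S - S/(k+1)" using aS by simp
    also have "\<dots> = k * (S / (k+1))" using kpos by (simp add: field_simps)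
    finally show ?thesis unfolding q_def using kpos by (simp add: field_simps)
  qed
  have pa: "p < a" using pq qle aS by simp
  have teq: "t = a + k * (q - p)" unfolding p_def q_def using kpos by (simp add: field_simps)
  show ?thesis
  proof (cases "p = 0")
    case True
    then show ?thesis using k apos pq unfolding p_def[symmetric] q_def[symmetric]
      by (simp add: zero_power)
  next
    case False
    then have ppos: "p > 0" using p0 by simp
    have B: "1 + real k * ((q - p)/p) \<le> (1 + (q-p)/p)^k"
      by (rule Bernoulli_inequality) (use ppos pq in \<open>simp add: field_simps\<close>)
    have "1 + (q-p)/p = q/p" using ppos by (simp add: field_simps)
    then have B2: "1 + real k * ((q - p)/p) \<le> q^k / p^k" using B by (simp add: power_divide)
    have "k * (q - p) / a < k * (q - p) / p"
      using kpos pq ppos pa by (intro divide_strict_left_mono) (auto intro: mult_pos_pos)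
    moreover have "t / a = 1 + k * (q - p) / a" using teq apos by (simp add: field_simps)
    ultimately have "t / a < 1 + real k * ((q - p)/p)" by simp
    then have "t / a < q^k / p^k" using B2 by linarith
    then have "t * p^k < a * q^k" using apos ppos by (simp add: field_simps)
    then show ?thesis unfolding p_def q_def .
  qed
qed



lemma cmat_mult:
  fixes A B Q :: "real^'n^'n"
  shows "cmat A B ** (\<chi> i j. complex_of_real (Q$i$j)) = cmat (A ** Q) (B ** Q)"
  by (simp add: cmat_def matrix_matrix_mult_def vec_eq_iff complex_eq_iff Re_sum Im_sum)

lemma det_ofreal:
  fixes Q :: "real^'n^'n"
  shows "det (\<chi> i j. complex_of_real (Q$i$j)) = of_real (det Q)"
  by (simp add: det_def)

lemma nsq_cmat: "nsq ((cmat X Y)$i) = (\<Sum>j\<in>UNIV. (X$i$j)^2 + (Y$i$j)^2)"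
  by (simp add: nsq_def cmat_def cmod_power2)

lemma transpose_cmat: "transpose (cmat X Y) = cmat (transpose X) (transpose Y)"
  by (simp add: cmat_def transpose_def vec_eq_iff)

lemma msq_rows: "msq (X::real^'n^'m) = (\<Sum>i\<in>UNIV. (norm (X$i))^2)"
  unfolding msq_def power2_norm_eq_inner inner_vec_def by (simp add: power2_eq_square)

lemma msq_transpose: "msq (transpose X) = msq X"
  unfolding msq_def transpose_def by simp (rule sum.swap)

lemma sum_nsq_cmat: "(\<Sum>i\<in>UNIV. nsq ((cmat X Y)$i)) = msq X + msq Y"
  by (simp add: nsq_cmat msq_def sum.distrib)

lemma msq_orth:
  fixes X Q :: "real^'n^'n"
  assumes Q: "orthogonal_matrix Q"
  shows "msq (X ** Q) = msq X"
proof -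
  have row: "(X ** Q)$i = transpose Q *v (X$i)" for i
    by (simp add: vec_eq_iff matrix_matrix_mult_def vector_matrix_mult_def)
  have ot: "orthogonal_transformation (\<lambda>x. transpose Q *v x)"
    using Q by (simp add: orthogonal_transformation_matrix matrix_vector_mul_linear del: transpose_matrix_vector)
  have "norm ((X ** Q)$i) = norm (X$i)" for i
    unfolding row by (rule orthogonal_transformation_norm[OF ot])
  then show ?thesis by (simp add: msq_rows)
qed

lemma powr4: "(x::real) > 0 \<Longrightarrow> (x powr (r/4))^4 = x powr r"
  by (simp add: powr_power)

theorem mainTheorem6:
  fixes A B :: "real^'n^'n" and \<alpha> \<beta> \<kappa> :: real and n :: nat
  assumes hn: "n = CARD('n)" and n2: "n \<ge> 2"
    and ha: "\<alpha> = msum A / real n"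
    and hb: "\<beta> = (msq A + msq B) / real n"
    and hk: "\<kappa> = (2 * real n * \<beta> - \<alpha>^2) / (2 * real n - 1)"
    and bpos: "\<beta> > 0"
  shows "(\<alpha>^2 < \<beta> \<longrightarrow> cmod (det (cmat A B)) \<le> \<beta> powr (real n / 2))
       \<and> (\<alpha>^2 = \<beta> \<longrightarrow>
            cmod (det (cmat A B)) \<le> sqrt \<bar>\<alpha>\<bar> * \<kappa> powr ((2 * real n - 1) / 4)
          \<and> sqrt \<bar>\<alpha>\<bar> * \<kappa> powr ((2 * real n - 1) / 4) = \<beta> powr (real n / 2))
       \<and> (\<alpha>^2 > \<beta> \<longrightarrow>
            cmod (det (cmat A B)) \<le> sqrt \<bar>\<alpha>\<bar> * \<kappa> powr ((2 * real n - 1) / 4)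
          \<and> sqrt \<bar>\<alpha>\<bar> * \<kappa> powr ((2 * real n - 1) / 4) < \<beta> powr (real n / 2))"
proof -
  define M where "M = cmat A B"
  define D where "D = cmod (det M)"
  have D0: "D \<ge> 0" unfolding D_def by simp
  have rn: "real n > 0" using n2 by simp
  have cardU: "card (UNIV::'n set) = n" using hn by simp
  have msqAB: "msq A + msq B = real n * \<beta>" using hb rn by simp
  have rowsum: "(\<Sum>i\<in>UNIV. nsq (M$i)) = real n * \<beta>"
    unfolding M_def sum_nsq_cmat msqAB ..
  have Dh: "D^2 \<le> (\<Prod>i\<in>UNIV. nsq (M$i))" unfolding D_def by (rule hadamard)
  also have "\<dots> \<le> ((\<Sum>i\<in>UNIV. nsq (M$i)) / card (UNIV::'n set)) ^ card (UNIV::'n set)"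
    by (rule amgm) (auto simp: nsq_nonneg)
  also have "\<dots> = \<beta> ^ n" unfolding rowsum cardU using rn by simp
  finally have D2: "D^2 \<le> \<beta>^n" .
  define Bn where "Bn = \<beta> powr (real n / 2)"
  have Bn0: "Bn \<ge> 0" unfolding Bn_def by simp
  have "Bn^2 = \<beta> powr (real 2 * (real n / 2))" unfolding Bn_def
    by (rule powr_power) (use bpos in simp)
  also have "\<dots> = \<beta>^n" using bpos by (simp add: powr_realpow)
  finally have Bn2: "Bn^2 = \<beta>^n" .
  have Dgen: "D \<le> Bn"
    by (rule power2_le_imp_le) (use D2 Bn2 Bn0 in auto)
  have Bn4: "Bn^4 = \<beta>^(2*n)"
  proof -
    have "Bn^4 = (Bn^2)^2" using power_mult[of Bn 2 2] by simp
    also have "\<dots> = \<beta>^(2*n)" unfolding Bn2 by (simp add: power_mult[symmetric] mult.commute)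
    finally show ?thesis .
  qed
  define k where "k = 2 * n - 1"
  have rk: "real k = 2 * real n - 1" unfolding k_def using n2 by (simp add: of_nat_diff)
  have k1: "k \<ge> 1" unfolding k_def using n2 by simp
  have k2n: "k + 1 = 2 * n" unfolding k_def using n2 by simp
  have big: "D^4 \<le> \<alpha>^2 * \<kappa>^k \<and> \<alpha>^2 \<le> real n * \<beta>" if ab: "\<beta> \<le> \<alpha>^2"
  proof -
    obtain j0 :: 'n where True by simp
    define u :: "real^'n" where "u = (\<chi> i. 1 / sqrt (real n))"
    have ss: "(1 / sqrt (real n)) * (1 / sqrt (real n)) = 1 / real n"
      using rn by (simp add: real_sqrt_mult_self)
    have "inner u u = 1"
      unfolding u_def inner_vec_def using rn by (simp add: ss cardU)
    then have nu: "norm u = 1" by (simp add: norm_eq_sqrt_inner)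
    obtain Q where Q: "orthogonal_matrix Q" "Q *v axis j0 1 = u"
      using orthogonal_matrix_exists_basis[OF nu, where k=j0] by blast
    have "column j0 Q = u" using Q(2) by (simp add: matrix_vector_mult_basis)
    then have Qc: "Q$i$j0 = 1 / sqrt (real n)" for i
      by (metis column_def u_def vec_lambda_beta)
    define Qc where "Qc = (\<chi> i j. complex_of_real (Q$i$j))"
    define N where "N = M ** Qc"
    have Neq: "N = cmat (A ** Q) (B ** Q)" unfolding N_def M_def Qc_def by (rule cmat_mult)
    have dQ: "cmod (det Qc) = 1"
      using det_orthogonal_matrix[OF Q(1)] unfolding Qc_def det_ofreal by auto
    have DN: "cmod (det N) = D" unfolding N_def D_def det_mul norm_mult dQ by simp
    have hC: "D^2 \<le> (\<Prod>j\<in>UNIV. nsq ((transpose N)$j))"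
      using hadamard[of "transpose N"] DN by simp
    have colsum: "(\<Sum>j\<in>UNIV. nsq ((transpose N)$j)) = real n * \<beta>"
      unfolding Neq transpose_cmat sum_nsq_cmat msq_transpose msq_orth[OF Q(1)] msqAB ..
    define x where "x = case_sum (\<lambda>i. nsq (M$i)) (\<lambda>j. nsq ((transpose N)$j))"
    have xnn: "x z \<ge> 0" for z by (cases z) (simp_all add: x_def nsq_nonneg)
    have UP: "(UNIV :: ('n + 'n) set) = UNIV <+> UNIV" by simp
    have prodx: "(\<Prod>z\<in>UNIV. x z) = (\<Prod>i\<in>UNIV. nsq (M$i)) * (\<Prod>j\<in>UNIV. nsq ((transpose N)$j))"
    proof -
      have "(\<Prod>z\<in>UNIV. x z) = (\<Prod>z\<in>(UNIV::'n set) <+> (UNIV::'n set). x z)" by simp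
      also have "\<dots> = (\<Prod>i\<in>UNIV. (x \<circ> Inl) i) * (\<Prod>j\<in>UNIV. (x \<circ> Inr) j)"
        by (rule prod.Plus) simp_all
      finally show ?thesis by (simp add: x_def)
    qed
    have sumx: "(\<Sum>z\<in>UNIV. x z) = 2 * real n * \<beta>"
    proof -
      have "(\<Sum>z\<in>UNIV. x z) = (\<Sum>z\<in>(UNIV::'n set) <+> (UNIV::'n set). x z)" by simp
      also have "\<dots> = (\<Sum>i\<in>UNIV. (x \<circ> Inl) i) + (\<Sum>j\<in>UNIV. (x \<circ> Inr) j)"
        by (rule sum.Plus) simp_all
      finally show ?thesis using rowsum colsum by (simp add: x_def)
    qed
    have D4: "D^4 \<le> (\<Prod>z\<in>UNIV. x z)"
    proof -
      have "D^4 = D^2 * D^2" by (simp add: power_add[symmetric])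
      also have "\<dots> \<le> (\<Prod>i\<in>UNIV. nsq (M$i)) * (\<Prod>j\<in>UNIV. nsq ((transpose N)$j))"
        by (rule mult_mono[OF Dh hC]) (simp_all add: prod_nonneg nsq_nonneg)
      finally show ?thesis unfolding prodx .
    qed
    define t where "t = x (Inr j0)"
    have tval: "t = (\<Sum>i\<in>UNIV. ((A**Q)$i$j0)^2 + ((B**Q)$i$j0)^2)"
      unfolding t_def x_def Neq transpose_cmat nsq_cmat by (simp add: transpose_def)
    have AQ: "(A**Q)$i$j0 = (A *v u)$i" for i
      by (simp add: matrix_matrix_mult_def matrix_vector_mult_def Qc u_def)
    have tge1: "(\<Sum>i\<in>UNIV. ((A *v u)$i)^2) \<le> t"
      unfolding tval AQ[symmetric] by (rule sum_mono) simp
    have nAu: "(\<Sum>i\<in>UNIV. ((A *v u)$i)^2) = (norm (A *v u))^2"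
      unfolding power2_norm_eq_inner inner_vec_def by (simp add: power2_eq_square)
    have cs: "\<bar>inner u (A *v u)\<bar> \<le> norm (A *v u)"
      using Cauchy_Schwarz_ineq2[of u "A *v u"] nu by simp
    have "inner u (A *v u) = (\<Sum>i\<in>UNIV. \<Sum>k\<in>UNIV. A$i$k * ((1 / sqrt (real n)) * (1 / sqrt (real n))))"
      by (simp add: inner_vec_def u_def matrix_vector_mult_def sum_distrib_left mult_ac)
    also have "\<dots> = msum A / real n"
      unfolding ss msum_def by (simp add: sum_divide_distrib)
    finally have innval: "inner u (A *v u) = \<alpha>" using ha by simp
    have "\<alpha>^2 \<le> (norm (A *v u))^2"
      using power_mono[OF cs, of 2] innval by simp
    then have at: "\<alpha>^2 \<le> t" using tge1 nAu by simp
    have "t \<le> (\<Sum>j\<in>UNIV. nsq ((transpose N)$j))"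
      unfolding t_def x_def by simp (rule member_le_sum, simp_all add: nsq_nonneg)
    then have tle: "t \<le> real n * \<beta>" using colsum by simp
    define T where "T = (UNIV::('n+'n) set) - {Inr j0}"
    have cU: "card (UNIV::('n+'n) set) = 2 * n"
      by (subst UP, subst card_Plus) (simp_all add: cardU)
    have cardT: "card T = k" unfolding T_def using cU k_def by (simp add: card_Diff_singleton)
    have "Inl j0 \<in> T" unfolding T_def by simp
    then have Tne: "T \<noteq> {}" by blast
    have prodT: "(\<Prod>z\<in>UNIV. x z) = t * (\<Prod>z\<in>T. x z)"
      unfolding T_def t_def by (rule prod.remove) simp_all
    have sumT: "(\<Sum>z\<in>UNIV. x z) = t + (\<Sum>z\<in>T. x z)"
      unfolding T_def t_def by (rule sum.remove) simp_all
    have "(\<Prod>z\<in>T. x z) \<le> ((\<Sum>z\<in>T. x z) / card T) ^ card T"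
      by (rule amgm[OF _ Tne]) (simp_all add: xnn T_def)
    also have "\<dots> = ((2 * real n * \<beta> - t) / real k) ^ k"
      using sumT sumx cardT by simp
    finally have pT: "(\<Prod>z\<in>T. x z) \<le> ((2 * real n * \<beta> - t) / real k) ^ k" .
    have t0: "t \<ge> 0" unfolding t_def by (rule xnn)
    have step1: "(\<Prod>z\<in>UNIV. x z) \<le> t * ((2 * real n * \<beta> - t) / real k) ^ k"
      unfolding prodT by (rule mult_left_mono[OF pT t0])
    have step2: "t * ((2 * real n * \<beta> - t) / real k) ^ k \<le> \<alpha>^2 * ((2 * real n * \<beta> - \<alpha>^2) / real k) ^ k"
    proof (cases "t = \<alpha>^2")
      case True then show ?thesis by simp
    next
      case False
      then have lt: "\<alpha>^2 < t" using at by simp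
      have "real n * \<beta> > 0" using rn bpos by simp
      then have tS: "t \<le> 2 * real n * \<beta>" using tle by linarith
      show ?thesis
        by (rule less_imp_le, rule key_strict[OF k1 _ lt tS]) (use ab rn k2n in simp)
    qed
    have kap: "\<kappa> = (2 * real n * \<beta> - \<alpha>^2) / real k" using hk rk by simp
    show ?thesis using D4 step1 step2 kap at tle by simp
  qed
  define R where "R = sqrt \<bar>\<alpha>\<bar> * \<kappa> powr ((2 * real n - 1) / 4)"
  have R0: "R \<ge> 0" unfolding R_def by simp
  have case2: "D \<le> R \<and> R^4 = \<alpha>^2 * \<kappa>^k \<and> \<kappa> > 0" if ab: "\<beta> \<le> \<alpha>^2"
  proof -
    have an: "\<alpha>^2 \<le> real n * \<beta>" using big[OF ab] by simp
    have "real n * \<beta> > 0" using rn bpos by simp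
    then have "2 * real n * \<beta> - \<alpha>^2 > 0" using an by linarith
    moreover have "2 * real n - 1 > 0" using n2 by simp
    ultimately have kp: "\<kappa> > 0" unfolding hk by simp
    have "(sqrt \<bar>\<alpha>\<bar>)^4 = \<alpha>^2"
    proof -
      have "(sqrt \<bar>\<alpha>\<bar>)^4 = ((sqrt \<bar>\<alpha>\<bar>)^2)^2" using power_mult[of "sqrt \<bar>\<alpha>\<bar>" 2 2] by simp
      also have "\<dots> = \<alpha>^2" by simp
      finally show ?thesis .
    qed
    moreover have "(\<kappa> powr ((2 * real n - 1) / 4))^4 = \<kappa>^k"
      using powr4[OF kp, of "2 * real n - 1"] kp by (simp add: rk[symmetric] powr_realpow)
    ultimately have R4: "R^4 = \<alpha>^2 * \<kappa>^k" unfolding R_def by (simp add: power_mult_distrib)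
    have "D \<le> R"
      by (rule power_le_imp_le_base[of _ 3]) (use big[OF ab] R4 R0 in auto)
    then show ?thesis using R4 kp by simp
  qed
  have part2: "R = Bn" if ab: "\<alpha>^2 = \<beta>"
  proof -
    have "\<kappa> = \<beta>" unfolding hk using ab n2 by (simp add: field_simps)
    moreover have "R^4 = \<alpha>^2 * \<kappa>^k" using case2 ab by simp
    ultimately have "R^4 = \<beta> * \<beta>^k" using ab by simp
    also have "\<dots> = \<beta>^(k+1)" by simp
    finally have "R^4 = \<beta>^(2*n)" unfolding k2n .
    then have "R^4 = Bn^4" using Bn4 by simp
    then show ?thesis using R0 Bn0 by (rule power_eq_imp_eq_base) simp
  qed
  have part3: "R < Bn" if ab: "\<alpha>^2 > \<beta>"
  proof -
    have an: "\<alpha>^2 \<le> real n * \<beta>" using big ab by simp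
    have e1: "2 * real n * \<beta> - \<beta> = real k * \<beta>" unfolding rk by (simp add: algebra_simps)
    have eqk: "(2 * real n * \<beta> - \<beta>) / real k = \<beta>" unfolding e1 using k1 by simp
    have "\<alpha>^2 * ((2 * real n * \<beta> - \<alpha>^2) / real k)^k < \<beta> * ((2 * real n * \<beta> - \<beta>) / real k)^k"
    proof (rule key_strict[OF k1])
      show "2 * real n * \<beta> / real (k + 1) \<le> \<beta>" unfolding k2n using rn by simp
      show "\<beta> < \<alpha>^2" by fact
      have "real n * \<beta> > 0" using rn bpos by simp
      then show "\<alpha>^2 \<le> 2 * real n * \<beta>" using an by linarith
    qed
    then have lt: "\<alpha>^2 * ((2 * real n * \<beta> - \<alpha>^2) / real k)^k < \<beta> * \<beta>^k" unfolding eqk .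
    have kap: "\<kappa> = (2 * real n * \<beta> - \<alpha>^2) / real k" using hk rk by simp
    have "R^4 = \<alpha>^2 * \<kappa>^k" using case2 ab by simp
    then have "R^4 < \<beta> * \<beta>^k" using lt kap by simp
    also have "\<dots> = \<beta>^(k+1)" by simp
    also have "\<dots> = Bn^4" using Bn4 k2n by simp
    finally show ?thesis using Bn0 by (rule power_less_imp_less_base)
  qed
  show ?thesis
    using Dgen case2 part2 part3 unfolding D_def M_def R_def Bn_def
    by (smt (verit))
qed

end
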